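(* Let $(u,m)$ be a pair of smooth (classical) solutions to the system \[ \begin{cases} u_t + \frac{\sigma^2}{2} u_{xx} - ru + G(u_x,m)^2 = 0, & 0<t<T,\ 0<x<L,\\ m_t - \frac{\sigma^2}{2} m_{xx} - \{G(u_x,m)m\}_x = 0, & 0<t<T,\ 0<x<L,\\ m(0,x)=m_0(x),\quad u(T,x)=u_T(x), & 0\le x\le L,\\ u_x(t,0)=u_x(t,L)=0, & 0\le t\le T,\\ \frac{\sigma^2}{2} m_x(t,x) + G(u_x,m)m(t,x) = 0, & 0\le t\le T,\ x\in\{0,L\}, \end{cases} \] where $G(u_x,m)(t,x) := \frac12\left(b + c\int_0^L u_x(t,y)m(t,y)\,dy - u_x(t,x)\right)$. Then \[ \|u\|_\infty + \|u_x\|_\infty \le C, \] where the constant $C>0$ does not depend on $\sigma$. In particular, for all $t\in[0,T]$, \[ \left|\int_0^L u_x(t,x)m(t,x)\,dx\right| \le C, \] with $C>0$ independent of $\sigma$.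
   Context: Standing setting: $L,T,\sigma,r>0$ are constants, $\epsilon>0$, and $b=\frac{2}{2+\epsilon}$, $c=\frac{\epsilon}{2+\epsilon}$. The data satisfy: $u_T,m_0\in C^{2+\gamma}([0,L])$ for some $\gamma>0$; $u_T'(0)=u_T'(L)=0$ and $m_0(0)=m_0'(0)=m_0(L)=m_0'(L)=0$; $m_0$ is a probability density on $[0,L]$; $u_T\ge 0$. Constants may depend on $u_T,m_0,L,T,r,\epsilon$ but (as stated) not on $\sigma$. $\|\cdot\|_\infty$ is the sup norm on $[0,T]\times[0,L]$. *)

theory Defs
  imports "HOL-Analysis.Analysis"
begin

definition C2_holder :: "real \<Rightarrow> real \<Rightarrow> (real \<Rightarrow> real) \<Rightarrow> (real \<Rightarrow> real) \<Rightarrow> (real \<Rightarrow> real) \<Rightarrow> bool" where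
  "C2_holder \<gamma> L f f' f'' \<longleftrightarrow>
     (\<forall>x\<in>{0..L}. (f has_real_derivative f' x) (at x within {0..L})) \<and>
     (\<forall>x\<in>{0..L}. (f' has_real_derivative f'' x) (at x within {0..L})) \<and>
     (\<exists>K. \<forall>x\<in>{0..L}. \<forall>y\<in>{0..L}. \<bar>f'' x - f'' y\<bar> \<le> K * \<bar>x - y\<bar> powr \<gamma>)"

definition G :: "real \<Rightarrow> real \<Rightarrow> real \<Rightarrow> (real \<Rightarrow> real \<Rightarrow> real) \<Rightarrow> (real \<Rightarrow> real \<Rightarrow> real) \<Rightarrow> real \<Rightarrow> real \<Rightarrow> real" where
  "G b c L ux m t x = (1/2) * (b + c * integral {0..L} (\<lambda>y. ux t y * m t y) - ux t x)"

definition classical_solution :: "real \<Rightarrow> real \<Rightarrow> real \<Rightarrow> real \<Rightarrow> real \<Rightarrow> (real \<Rightarrow> real) \<Rightarrow> (real \<Rightarrow> real) \<Rightarrow> (real \<Rightarrow> real \<Rightarrow> real) \<Rightarrow> (real \<Rightarrow> real \<Rightarrow> real) \<Rightarrow> (real \<Rightarrow> real \<Rightarrow> real) \<Rightarrow> (real \<Rightarrow> real \<Rightarrow> real) \<Rightarrow> (real \<Rightarrow> real \<Rightarrow> real) \<Rightarrow> (real \<Rightarrow> real \<Rightarrow> real) \<Rightarrow> (real \<Rightarrow> real \<Rightarrow> real) \<Rightarrow> (real \<Rightarrow> real \<Rightarrow> real) \<Rightarrow> bool" where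
  "classical_solution \<sigma> r \<epsilon> L T uT m0 u ut ux uxx m mt mx mxx \<longleftrightarrow>
    (let b = 2 / (2 + \<epsilon>); c = \<epsilon> / (2 + \<epsilon>); R = {0..T} \<times> {0..L} in
     continuous_on R (\<lambda>(t,x). u t x) \<and> continuous_on R (\<lambda>(t,x). ut t x) \<and>
     continuous_on R (\<lambda>(t,x). ux t x) \<and> continuous_on R (\<lambda>(t,x). uxx t x) \<and>
     continuous_on R (\<lambda>(t,x). m t x) \<and> continuous_on R (\<lambda>(t,x). mt t x) \<and>
     continuous_on R (\<lambda>(t,x). mx t x) \<and> continuous_on R (\<lambda>(t,x). mxx t x) \<and>
     (\<forall>t\<in>{0..T}. \<forall>x\<in>{0..L}.
        ((\<lambda>s. u s x) has_real_derivative ut t x) (at t within {0..T}) \<and>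
        ((\<lambda>y. u t y) has_real_derivative ux t x) (at x within {0..L}) \<and>
        ((\<lambda>y. ux t y) has_real_derivative uxx t x) (at x within {0..L}) \<and>
        ((\<lambda>s. m s x) has_real_derivative mt t x) (at t within {0..T}) \<and>
        ((\<lambda>y. m t y) has_real_derivative mx t x) (at x within {0..L}) \<and>
        ((\<lambda>y. mx t y) has_real_derivative mxx t x) (at x within {0..L})) \<and>
     (\<forall>t\<in>{0<..<T}. \<forall>x\<in>{0<..<L}.
        ut t x + \<sigma>\<^sup>2 / 2 * uxx t x - r * u t x + (G b c L ux m t x)\<^sup>2 = 0 \<and>
        mt t x - \<sigma>\<^sup>2 / 2 * mxx t x - deriv (\<lambda>y. G b c L ux m t y * m t y) x = 0) \<and>
     (\<forall>x\<in>{0..L}. m 0 x = m0 x \<and> u T x = uT x) \<and>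
     (\<forall>t\<in>{0..T}. ux t 0 = 0 \<and> ux t L = 0) \<and>
     (\<forall>t\<in>{0..T}. \<forall>x\<in>{0, L}. \<sigma>\<^sup>2 / 2 * mx t x + G b c L ux m t x * m t x = 0))"

end

theory Submission
  imports Defs
begin


lemma d1_max_right:
  fixes f :: "real \<Rightarrow> real"
  assumes "(f has_real_derivative D) (at x within {a..b})" "x \<in> {a..<b}"
    "\<And>y. y \<in> {a..b} \<Longrightarrow> f y \<le> f x"
  shows "D \<le> 0"
proof (rule ccontr)
  assume "\<not> D \<le> 0"
  then obtain d where d: "d > 0" "\<And>h. h > 0 \<Longrightarrow> x + h \<in> {a..b} \<Longrightarrow> h < d \<Longrightarrow> f x < f (x+h)"
    using has_real_derivative_pos_inc_right[OF assms(1)] by force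
  define h where "h = min d (b - x) / 2"
  have "h > 0" "h < d" "x + h \<in> {a..b}" using d(1) assms(2) by (auto simp: h_def min_def field_simps)
  then show False using d(2)[of h] assms(3)[of "x+h"] by auto
qed

lemma d1_max_left:
  fixes f :: "real \<Rightarrow> real"
  assumes "(f has_real_derivative D) (at x within {a..b})" "x \<in> {a<..b}"
    "\<And>y. y \<in> {a..b} \<Longrightarrow> f y \<le> f x"
  shows "D \<ge> 0"
proof (rule ccontr)
  assume "\<not> D \<ge> 0"
  then obtain d where d: "d > 0" "\<And>h. h > 0 \<Longrightarrow> x - h \<in> {a..b} \<Longrightarrow> h < d \<Longrightarrow> f x < f (x-h)"
    using has_real_derivative_neg_dec_left[OF assms(1)] by force
  define h where "h = min d (x - a) / 2"
  have "h > 0" "h < d" "x - h \<in> {a..b}" using d(1) assms(2) by (auto simp: h_def min_def field_simps)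
  then show False using d(2)[of h] assms(3)[of "x-h"] by auto
qed

lemma d1_min_right:
  fixes f :: "real \<Rightarrow> real"
  assumes "(f has_real_derivative D) (at x within {a..b})" "x \<in> {a..<b}"
    "\<And>y. y \<in> {a..b} \<Longrightarrow> f x \<le> f y"
  shows "D \<ge> 0"
  using d1_max_right[of "\<lambda>y. - f y" "-D" x a b] assms DERIV_minus by fastforce

lemma d1_min_left:
  fixes f :: "real \<Rightarrow> real"
  assumes "(f has_real_derivative D) (at x within {a..b})" "x \<in> {a<..b}"
    "\<And>y. y \<in> {a..b} \<Longrightarrow> f x \<le> f y"
  shows "D \<le> 0"
  using d1_max_left[of "\<lambda>y. - f y" "-D" x a b] assms DERIV_minus by fastforce

lemma d2_max:
  fixes f f' :: "real \<Rightarrow> real"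
  assumes ab: "a < b"
    and d1: "\<And>y. y \<in> {a..b} \<Longrightarrow> (f has_real_derivative f' y) (at y within {a..b})"
    and d2: "(f' has_real_derivative D) (at x within {a..b})"
    and x: "x \<in> {a..b}" and f'0: "f' x = 0"
    and mx: "\<And>y. y \<in> {a..b} \<Longrightarrow> f y \<le> f x"
  shows "D \<le> 0"
proof (rule ccontr)
  assume D: "\<not> D \<le> 0"
  show False
  proof (cases "x < b")
    case True
    then obtain d where d: "d > 0" "\<And>h. h > 0 \<Longrightarrow> x + h \<in> {a..b} \<Longrightarrow> h < d \<Longrightarrow> f' x < f' (x+h)"
      using has_real_derivative_pos_inc_right[OF d2] D by force
    define h where "h = min d (b - x) / 2"
    have h: "h > 0" "h < d" "x + h \<le> b" using d(1) True by (auto simp: h_def min_def field_simps)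
    have "\<exists>z\<in>{x<..<x+h}. f (x+h) - f x = (*) (f' z) (x + h - x)"
    proof (rule mvt_simple)
      fix z assume "x \<le> z" "z \<le> x + h"
      then have "(f has_real_derivative f' z) (at z within {a..b})" using d1 x h by auto
      then show "(f has_derivative (*) (f' z)) (at z within {x..x+h})"
        unfolding has_field_derivative_def[symmetric]
        by (rule DERIV_subset) (use x h in auto)
    qed (use h in auto)
    then obtain z where z: "z \<in> {x<..<x+h}" "f (x+h) - f x = f' z * h" by auto
    have "f' z > 0" using d(2)[of "z - x"] z x h f'0 by auto
    then have "f (x+h) > f x" using z h by (smt (verit) mult_pos_pos)
    then show False using mx[of "x+h"] x h by auto
  next
    case False
    then have xb: "x = b" using x by auto
    then obtain d where d: "d > 0" "\<And>h. h > 0 \<Longrightarrow> x - h \<in> {a..b} \<Longrightarrow> h < d \<Longrightarrow> f' (x-h) < f' x"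
      using has_real_derivative_pos_inc_left[OF d2] D by force
    define h where "h = min d (b - a) / 2"
    have h: "h > 0" "h < d" "x - h \<ge> a" using d(1) ab xb by (auto simp: h_def min_def field_simps)
    have "\<exists>z\<in>{x-h<..<x}. f x - f (x-h) = (*) (f' z) (x - (x - h))"
    proof (rule mvt_simple)
      fix z assume "x - h \<le> z" "z \<le> x"
      then have "(f has_real_derivative f' z) (at z within {a..b})" using d1 x h by auto
      then show "(f has_derivative (*) (f' z)) (at z within {x-h..x})"
        unfolding has_field_derivative_def[symmetric]
        by (rule DERIV_subset) (use x h in auto)
    qed (use h in auto)
    then obtain z where z: "z \<in> {x-h<..<x}" "f x - f (x-h) = f' z * h" by auto
    have "f' z < 0" using d(2)[of "x - z"] z x h f'0 by auto
    then have "f (x-h) > f x" using z h by (smt (verit) mult_neg_pos)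
    then show False using mx[of "x-h"] x h by auto
  qed
qed

lemma d2_min:
  fixes f f' :: "real \<Rightarrow> real"
  assumes ab: "a < b"
    and d1: "\<And>y. y \<in> {a..b} \<Longrightarrow> (f has_real_derivative f' y) (at y within {a..b})"
    and d2: "(f' has_real_derivative D) (at x within {a..b})"
    and x: "x \<in> {a..b}" and f'0: "f' x = 0"
    and mn: "\<And>y. y \<in> {a..b} \<Longrightarrow> f x \<le> f y"
  shows "D \<ge> 0"
  using d2_max[of a b "\<lambda>y. - f y" "\<lambda>y. - f' y" "-D" x] assms DERIV_minus by fastforce



lemma maxp:
  fixes w wt wx wxx :: "real \<Rightarrow> real \<Rightarrow> real"
  assumes ab: "a < b" and T: "0 < T" and s: "0 \<le> s" and r: "0 < r"
  and cont: "continuous_on ({0..T}\<times>{a..b}) (\<lambda>(t,x). w t x)"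
  and dt: "\<And>t x. t\<in>{0..T} \<Longrightarrow> x\<in>{a..b} \<Longrightarrow> ((\<lambda>s. w s x) has_real_derivative wt t x) (at t within {0..T})"
  and dx: "\<And>t x. t\<in>{0..T} \<Longrightarrow> x\<in>{a..b} \<Longrightarrow> ((\<lambda>y. w t y) has_real_derivative wx t x) (at x within {a..b})"
  and dxx: "\<And>t x. t\<in>{0..T} \<Longrightarrow> x\<in>{a..b} \<Longrightarrow> ((\<lambda>y. wx t y) has_real_derivative wxx t x) (at x within {a..b})"
  and trm: "\<And>x. x\<in>{a..b} \<Longrightarrow> w T x \<le> B"
  and bdry: "\<And>t x. t\<in>{0..<T} \<Longrightarrow> x \<in> {a,b} \<Longrightarrow> wx t x = 0 \<or> w t x \<le> B"
  and eq: "\<And>t x. t\<in>{0..<T} \<Longrightarrow> x\<in>{a..b} \<Longrightarrow> wx t x = 0 \<Longrightarrow> r * w t x \<le> wt t x + s * wxx t x + r * B"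
  shows "\<forall>t\<in>{0..T}. \<forall>x\<in>{a..b}. w t x \<le> B"
proof (rule ccontr)
  assume "\<not> ?thesis"
  then obtain t1 x1 where p1: "t1 \<in> {0..T}" "x1 \<in> {a..b}" "w t1 x1 > B" by force
  have "\<exists>p\<in>{0..T}\<times>{a..b}. \<forall>q\<in>{0..T}\<times>{a..b}. (\<lambda>(t,x). w t x) q \<le> (\<lambda>(t,x). w t x) p"
    by (rule continuous_attains_sup) (use cont ab T in \<open>auto intro: compact_Times\<close>)
  then obtain t0 x0 where p0: "t0 \<in> {0..T}" "x0 \<in> {a..b}"
    and mx: "\<And>t x. t \<in> {0..T} \<Longrightarrow> x \<in> {a..b} \<Longrightarrow> w t x \<le> w t0 x0" by fastforce
  have gt: "w t0 x0 > B" using mx[OF p1(1,2)] p1(3) by linarith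
  have t0T: "t0 \<noteq> T" using trm[OF p0(2)] gt by auto
  then have t0: "t0 \<in> {0..<T}" using p0 by auto
  have wx0: "wx t0 x0 = 0"
  proof (cases "x0 \<in> {a,b}")
    case True
    then show ?thesis using bdry[OF t0 True] gt by auto
  next
    case False
    then have "x0 \<in> {a<..<b}" using p0 by auto
    then have "wx t0 x0 \<le> 0" "wx t0 x0 \<ge> 0"
      using d1_max_right[OF dx[OF p0], of ] d1_max_left[OF dx[OF p0]] mx[OF p0(1)] by auto
    then show ?thesis by simp
  qed
  have wt0: "wt t0 x0 \<le> 0"
    using d1_max_right[OF dt[OF p0]] t0 mx[OF _ p0(2)] by auto
  have wxx0: "wxx t0 x0 \<le> 0"
    by (rule d2_max[OF ab dx[OF p0(1)] dxx[OF p0] p0(2) wx0]) (use mx[OF p0(1)] in auto)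
  have "r * w t0 x0 \<le> r * B"
    using eq[OF t0 p0(2) wx0] wt0 wxx0 s by (smt (verit) mult_nonneg_nonpos)
  then show False using gt r by simp
qed



lemma psi_deriv:
  fixes A L :: real
  shows "((\<lambda>y. exp (A*(y - L/2)^2)) has_real_derivative exp (A*(y - L/2)^2) * (2*A*(y - L/2))) (at y within S)"
  by (auto intro!: derivative_eq_intros simp: algebra_simps)

lemma psi_deriv2:
  fixes A L :: real
  shows "((\<lambda>y. exp (A*(y - L/2)^2) * (2*A*(y - L/2))) has_real_derivative
     exp (A*(y - L/2)^2) * (2*A*(y - L/2))^2 + exp (A*(y - L/2)^2) * (2*A)) (at y within S)"
  by (auto intro!: derivative_eq_intros simp: algebra_simps power2_eq_square)

lemma minp:
  fixes w wt wx wxx \<beta> g :: "real \<Rightarrow> real \<Rightarrow> real"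
  assumes L: "0 < L" and T: "0 < T" and s: "0 < s"
  and cont: "continuous_on ({0..T}\<times>{0..L}) (\<lambda>(t,x). w t x)"
  and dt: "\<And>t x. t\<in>{0..T} \<Longrightarrow> x\<in>{0..L} \<Longrightarrow> ((\<lambda>s. w s x) has_real_derivative wt t x) (at t within {0..T})"
  and dx: "\<And>t x. t\<in>{0..T} \<Longrightarrow> x\<in>{0..L} \<Longrightarrow> ((\<lambda>y. w t y) has_real_derivative wx t x) (at x within {0..L})"
  and dxx: "\<And>t x. t\<in>{0..T} \<Longrightarrow> x\<in>{0..L} \<Longrightarrow> ((\<lambda>y. wx t y) has_real_derivative wxx t x) (at x within {0..L})"
  and init: "\<And>x. x\<in>{0..L} \<Longrightarrow> w 0 x \<ge> 0"
  and eq: "\<And>t x. t\<in>{0<..T} \<Longrightarrow> x\<in>{0..L} \<Longrightarrow> wt t x = s * wxx t x + \<beta> t x * w t x + g t x * wx t x"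
  and bb: "\<And>t x. t\<in>{0..T} \<Longrightarrow> x\<in>{0..L} \<Longrightarrow> \<bar>\<beta> t x\<bar> \<le> Bb"
  and bg: "\<And>t x. t\<in>{0..T} \<Longrightarrow> x\<in>{0..L} \<Longrightarrow> \<bar>g t x\<bar> \<le> Bg"
  and bc: "\<And>t x. t\<in>{0..T} \<Longrightarrow> x\<in>{0,L} \<Longrightarrow> s * wx t x + g t x * w t x = 0"
  shows "\<forall>t\<in>{0..T}. \<forall>x\<in>{0..L}. w t x \<ge> 0"
proof (rule ccontr)
  assume "\<not> ?thesis"
  then obtain t1 x1 where p1: "t1 \<in> {0..T}" "x1 \<in> {0..L}" "w t1 x1 < 0" by force
  have Bg0: "Bg \<ge> 0" using bg[of 0 0] T L by force
  have Bb0: "Bb \<ge> 0" using bb[of 0 0] T L by force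
  define A where "A = Bg / (s*L) + 1"
  have A0: "A > 0" using Bg0 s L by (simp add: A_def add_nonneg_pos)
  have sAL: "s*A*L > Bg" using s L by (simp add: A_def algebra_simps)
  define \<psi> where "\<psi> y = exp (A*(y - L/2)^2)" for y
  define lam where "lam = s*(A^2*L^2 + 2*A) + Bb + Bg*A*L + 1"
  have psi_pos: "\<And>y. \<psi> y > 0" by (simp add: \<psi>_def)
  have "continuous_on ({0..T}\<times>{0..L}) (\<lambda>p. exp(-lam*fst p) * (\<lambda>(t,x). w t x) p / \<psi> (snd p))"
    unfolding \<psi>_def by (intro continuous_intros cont) auto
  then have "\<exists>p\<in>{0..T}\<times>{0..L}. \<forall>q\<in>{0..T}\<times>{0..L}.
      exp(-lam*fst p) * (\<lambda>(t,x). w t x) p / \<psi> (snd p) \<le> exp(-lam*fst q) * (\<lambda>(t,x). w t x) q / \<psi> (snd q)"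
    by (intro continuous_attains_inf) (use L T in \<open>auto intro: compact_Times\<close>)
  then obtain t0 x0 where p0: "t0 \<in> {0..T}" "x0 \<in> {0..L}"
    and mn: "\<And>t x. t \<in> {0..T} \<Longrightarrow> x \<in> {0..L} \<Longrightarrow> exp(-lam*t0) * w t0 x0 / \<psi> x0 \<le> exp(-lam*t) * w t x / \<psi> x"
    by fastforce
  have "exp(-lam*t1) * w t1 x1 / \<psi> x1 < 0"
    using p1(3) psi_pos[of x1] by (simp add: divide_neg_pos mult_pos_neg)
  then have "exp(-lam*t0) * w t0 x0 / \<psi> x0 < 0" using mn[OF p1(1,2)] by linarith
  then have W: "w t0 x0 < 0"
  proof (rule contrapos_pp)
    assume "\<not> w t0 x0 < 0"
    then show "\<not> exp(-lam*t0) * w t0 x0 / \<psi> x0 < 0" using psi_pos[of x0]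
      by (intro leD divide_nonneg_pos mult_nonneg_nonneg) auto
  qed
  have t00: "t0 \<noteq> 0" using init[OF p0(2)] W by auto
  then have t0: "t0 \<in> {0<..T}" using p0 by auto
  define c where "c = w t0 x0 / \<psi> x0"
  have c0: "c < 0" using W psi_pos[of x0] by (simp add: c_def divide_neg_pos)
  have cx0: "c * \<psi> x0 = w t0 x0" using psi_pos[of x0] by (simp add: c_def)
  have wt_le: "wt t0 x0 \<le> lam * w t0 x0"
  proof -
    have der: "((\<lambda>t. exp(-lam*t) * w t x0) has_real_derivative
        exp(-lam*t0) * wt t0 x0 + (exp(-lam*t0) * (-lam)) * w t0 x0) (at t0 within {0..T})"
      by (auto intro!: derivative_eq_intros dt[OF p0] simp: algebra_simps)
    have "\<And>t. t\<in>{0..T} \<Longrightarrow> exp(-lam*t0) * w t0 x0 \<le> exp(-lam*t) * w t x0"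
    proof -
      fix t assume "t \<in> {0..T}"
      from mn[OF this p0(2)] psi_pos[of x0]
      show "exp(-lam*t0) * w t0 x0 \<le> exp(-lam*t) * w t x0" by (simp add: divide_le_cancel)
    qed
    then have "exp(-lam*t0) * wt t0 x0 + (exp(-lam*t0) * (-lam)) * w t0 x0 \<le> 0"
      by (intro d1_min_left[OF der]) (use t0 in auto)
    then have "exp(-lam*t0) * (wt t0 x0 - lam * w t0 x0) \<le> 0" by (simp add: algebra_simps)
    then show ?thesis by (simp add: mult_le_0_iff)
  qed
  define f where "f y = w t0 y - c * \<psi> y" for y
  define f' where "f' y = wx t0 y - c * (\<psi> y * (2*A*(y - L/2)))" for y
  have fmin: "\<And>y. y \<in> {0..L} \<Longrightarrow> f x0 \<le> f y"
  proof -
    fix y assume y: "y \<in> {0..L}"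
    have "exp(-lam*t0) * w t0 x0 / \<psi> x0 \<le> exp(-lam*t0) * w t0 y / \<psi> y" using mn[OF p0(1) y] .
    then have "c \<le> w t0 y / \<psi> y" by (simp add: c_def divide_le_cancel mult.assoc[symmetric] times_divide_eq_right[symmetric] del: times_divide_eq_right)
    then have "c * \<psi> y \<le> w t0 y" using psi_pos[of y] by (simp add: le_divide_eq)
    then show "f x0 \<le> f y" using cx0 by (simp add: f_def)
  qed
  have df: "\<And>y. y \<in> {0..L} \<Longrightarrow> (f has_real_derivative f' y) (at y within {0..L})"
    unfolding f_def f'_def \<psi>_def
    by (auto intro!: derivative_eq_intros dx[OF p0(1)] psi_deriv)
  have df': "(f' has_real_derivative (wxx t0 x0 - c * (\<psi> x0 * (2*A*(x0 - L/2))^2 + \<psi> x0 * (2*A))))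
       (at x0 within {0..L})"
    unfolding f'_def \<psi>_def
    by (auto intro!: derivative_eq_intros dxx[OF p0] psi_deriv2 simp: power2_eq_square algebra_simps)
  define k where "k = - w t0 x0"
  have k0: "k > 0" using W by (simp add: k_def)
  show False
  proof (cases "x0 = 0")
    case True
    have "f' x0 \<ge> 0" by (rule d1_min_right[OF df[OF p0(2)]]) (use True L fmin in auto)
    then have "wx t0 0 \<ge> c * (\<psi> 0 * (2*A*(0 - L/2)))" using True by (simp add: f'_def)
    also have "c * (\<psi> 0 * (2*A*(0 - L/2))) = k * A * L" using cx0 True by (simp add: k_def algebra_simps)
    finally have wxk: "wx t0 0 \<ge> k * A * L" .
    have "s * wx t0 0 = g t0 0 * k" using bc[of t0 0] p0 True by (simp add: k_def)
    moreover have "s * wx t0 0 \<ge> s * (k * A * L)" using wxk s by (simp add: mult_left_mono)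
    ultimately have "g t0 0 * k \<ge> (s * A * L) * k" by (simp add: algebra_simps)
    then have "g t0 0 \<ge> s * A * L" using k0 by simp
    then show False using bg[of t0 0] p0 True sAL by auto
  next
    case F0: False
    show False
    proof (cases "x0 = L")
      case True
      have "f' x0 \<le> 0" by (rule d1_min_left[OF df[OF p0(2)]]) (use True L fmin in auto)
      then have "wx t0 L \<le> c * (\<psi> L * (2*A*(L - L/2)))" using True by (simp add: f'_def)
      also have "c * (\<psi> L * (2*A*(L - L/2))) = - k * A * L" using cx0 True by (simp add: k_def algebra_simps)
      finally have wxk: "wx t0 L \<le> - k * A * L" .
      have "s * wx t0 L = g t0 L * k" using bc[of t0 L] p0 True by (simp add: k_def)
      moreover have "s * wx t0 L \<le> s * (- k * A * L)" using mult_left_mono[OF wxk, of s] s by simp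
      ultimately have "g t0 L * k \<le> (- s * A * L) * k" by (simp add: algebra_simps)
      then have "g t0 L * k \<le> (- s * A * L) * k" by simp
      then have "g t0 L \<le> - s * A * L" using k0 mult_le_cancel_right_pos by blast
      then show False using bg[of t0 L] p0 True sAL by auto
    next
      case False
      then have xi: "x0 \<in> {0<..<L}" using F0 p0 by auto
      have "f' x0 \<ge> 0" by (rule d1_min_right[OF df[OF p0(2)]]) (use xi fmin in auto)
      moreover have "f' x0 \<le> 0" by (rule d1_min_left[OF df[OF p0(2)]]) (use xi fmin in auto)
      ultimately have f'0: "f' x0 = 0" by simp
      have f''0: "wxx t0 x0 - c * (\<psi> x0 * (2*A*(x0 - L/2))^2 + \<psi> x0 * (2*A)) \<ge> 0"
        by (rule d2_min[OF L df df' p0(2) f'0 fmin])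
      define e where "e = 2*A*(x0 - L/2)"
      have wx_eq: "wx t0 x0 = - k * e" using f'0 cx0 by (simp add: f'_def k_def e_def algebra_simps)
      have eq1: "c * (\<psi> x0 * (2*A*(x0 - L/2))^2 + \<psi> x0 * (2*A)) = (c * \<psi> x0) * (e^2 + 2*A)"
        by (simp add: e_def algebra_simps)
      have wxx_ge: "wxx t0 x0 \<ge> - k * (e^2 + 2*A)" using f''0 unfolding eq1 cx0
        by (simp add: k_def)
      have "wt t0 x0 = s * wxx t0 x0 + \<beta> t0 x0 * w t0 x0 + g t0 x0 * wx t0 x0"
        using eq[OF t0 p0(2)] .
      also have "\<dots> \<ge> - k * (s*(e^2 + 2*A) + \<beta> t0 x0 + g t0 x0 * e)"
      proof -
        have h1: "s * wxx t0 x0 \<ge> s * (-k*(e^2+2*A))" using mult_left_mono[OF wxx_ge, of s] s by simp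
        have wk: "w t0 x0 = - k" by (simp add: k_def)
        have key: "s * wxx t0 x0 + \<beta> t0 x0 * w t0 x0 + g t0 x0 * wx t0 x0 - (- k * (s*(e^2 + 2*A) + \<beta> t0 x0 + g t0 x0 * e))
          = s * wxx t0 x0 - s * (-k*(e^2+2*A))"
          unfolding wx_eq wk by (simp add: algebra_simps)
        show ?thesis using h1 key by linarith
      qed
      finally have "- k * lam \<ge> - k * (s*(e^2 + 2*A) + \<beta> t0 x0 + g t0 x0 * e)"
        using wt_le by (simp add: k_def algebra_simps)
      then have lam_le: "lam \<le> s*(e^2 + 2*A) + \<beta> t0 x0 + g t0 x0 * e" using k0 by simp
      have ax: "\<bar>x0 - L/2\<bar> \<le> L/2" unfolding abs_le_iff using xi by auto
      have ae: "\<bar>e\<bar> \<le> A * L"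
      proof -
        have "\<bar>e\<bar> = 2*A*\<bar>x0 - L/2\<bar>" using A0 by (simp add: e_def abs_mult)
        also have "\<dots> \<le> 2*A*(L/2)" using ax A0 by (intro mult_left_mono) auto
        finally show ?thesis by simp
      qed
      then have "e^2 \<le> (A*L)^2" by (metis abs_ge_zero abs_le_square_iff abs_mult abs_of_pos A0 L mult_pos_pos)
      then have "s*(e^2 + 2*A) \<le> s*(A^2*L^2 + 2*A)" using s by (simp add: power_mult_distrib)
      moreover have "\<beta> t0 x0 \<le> Bb" using bb[OF p0] by simp
      moreover have "g t0 x0 * e \<le> Bg * (A * L)"
      proof -
        have "g t0 x0 * e \<le> \<bar>g t0 x0\<bar> * \<bar>e\<bar>" by (simp add: abs_mult[symmetric])
        also have "\<dots> \<le> Bg * (A*L)" by (rule mult_mono) (use bg[OF p0] ae Bg0 in auto)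
        finally show ?thesis .
      qed
      ultimately show False using lam_le by (simp add: lam_def algebra_simps)
    qed
  qed
qed



lemma shift_deriv:
  fixes f :: "real \<Rightarrow> real"
  assumes "(f has_real_derivative D) (at (y+h) within S)" "(\<lambda>z. z + h) ` S' \<subseteq> S"
  shows "((\<lambda>z. f (z+h)) has_real_derivative D) (at y within S')"
proof -
  have "(f has_real_derivative D) (at ((\<lambda>z. z + h) y) within ((\<lambda>z. z + h) ` S'))"
    using DERIV_subset[OF assms(1) assms(2)] by simp
  moreover have "((\<lambda>z. z + h) has_real_derivative 1) (at y within S')"
    by (auto intro!: derivative_eq_intros)
  ultimately have "(f \<circ> (\<lambda>z. z + h) has_real_derivative D * 1) (at y within S')"
    by (rule DERIV_image_chain)
  then show ?thesis by (simp add: o_def)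
qed

lemma cont_bounded:
  fixes F :: "real \<Rightarrow> real \<Rightarrow> real"
  assumes "continuous_on ({0..T}\<times>{0..L}) (\<lambda>(t,x). F t x)"
  shows "\<exists>B. \<forall>t\<in>{0..T}. \<forall>x\<in>{0..L}. \<bar>F t x\<bar> \<le> B"
proof -
  have "compact ((\<lambda>(t,x). F t x) ` ({0..T}\<times>{0..L}))"
    by (rule compact_continuous_image[OF assms]) (auto intro: compact_Times)
  then have "bounded ((\<lambda>(t,x). F t x) ` ({0..T}\<times>{0..L}))" by (rule compact_imp_bounded)
  then obtain B where "\<forall>y\<in>(\<lambda>(t,x). F t x) ` ({0..T}\<times>{0..L}). norm y \<le> B"
    unfolding bounded_iff by blast
  then show ?thesis by force
qed

lemma ext_closure:
  fixes F :: "real \<Rightarrow> real \<Rightarrow> real"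
  assumes T: "0 < T" and L: "0 < L"
    and cont: "continuous_on ({0..T}\<times>{0..L}) (\<lambda>(t,x). F t x)"
    and z: "\<And>t x. t\<in>{0<..<T} \<Longrightarrow> x\<in>{0<..<L} \<Longrightarrow> F t x = 0"
    and tx: "t\<in>{0..T}" "x\<in>{0..L}"
  shows "F t x = 0"
proof -
  have cl: "closure ({0<..<T}\<times>{0<..<L}) = {0..T}\<times>{0..L}"
    using T L by (simp add: closure_Times)
  have "(\<lambda>(t,x). F t x) (t,x) = 0"
    by (rule continuous_constant_on_closure[of "{0<..<T}\<times>{0<..<L}"]) (use cont cl z tx in auto)
  then show ?thesis by simp
qed

locale sol =
  fixes \<sigma> r \<epsilon> L T :: real and uT m0 :: "real \<Rightarrow> real"
    and u ut ux uxx m mt mx mxx :: "real \<Rightarrow> real \<Rightarrow> real"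
  assumes cs: "classical_solution \<sigma> r \<epsilon> L T uT m0 u ut ux uxx m mt mx mxx"
    and L: "L > 0" and T: "T > 0" and r: "r > 0" and eps: "\<epsilon> > 0" and sig: "\<sigma> > 0"
    and m0nn: "\<And>x. x\<in>{0..L} \<Longrightarrow> m0 x \<ge> 0" and m0int: "(m0 has_integral 1) {0..L}"
begin

abbreviation "bb \<equiv> 2 / (2 + \<epsilon>)"
abbreviation "cc \<equiv> \<epsilon> / (2 + \<epsilon>)"
abbreviation "RR \<equiv> {0..T}\<times>{0..L}"
abbreviation "ss \<equiv> \<sigma>\<^sup>2 / 2"

definition I where "I t = integral {0..L} (\<lambda>y. ux t y * m t y)"
definition Gf where "Gf t x = G bb cc L ux m t x"

lemma Gf_eq: "Gf t x = 1/2 * (bb + cc * I t - ux t x)"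
  by (simp add: Gf_def G_def I_def)

lemma facts:
  shows cu: "continuous_on RR (\<lambda>(t,x). u t x)" and cut: "continuous_on RR (\<lambda>(t,x). ut t x)"
    and cux: "continuous_on RR (\<lambda>(t,x). ux t x)" and cuxx: "continuous_on RR (\<lambda>(t,x). uxx t x)"
    and cm: "continuous_on RR (\<lambda>(t,x). m t x)" and cmt: "continuous_on RR (\<lambda>(t,x). mt t x)"
    and cmx: "continuous_on RR (\<lambda>(t,x). mx t x)" and cmxx: "continuous_on RR (\<lambda>(t,x). mxx t x)"
    and der: "\<forall>t\<in>{0..T}. \<forall>x\<in>{0..L}.
        ((\<lambda>s. u s x) has_real_derivative ut t x) (at t within {0..T}) \<and>
        ((\<lambda>y. u t y) has_real_derivative ux t x) (at x within {0..L}) \<and>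
        ((\<lambda>y. ux t y) has_real_derivative uxx t x) (at x within {0..L}) \<and>
        ((\<lambda>s. m s x) has_real_derivative mt t x) (at t within {0..T}) \<and>
        ((\<lambda>y. m t y) has_real_derivative mx t x) (at x within {0..L}) \<and>
        ((\<lambda>y. mx t y) has_real_derivative mxx t x) (at x within {0..L})"
    and pde: "\<forall>t\<in>{0<..<T}. \<forall>x\<in>{0<..<L}.
        ut t x + ss * uxx t x - r * u t x + (Gf t x)\<^sup>2 = 0 \<and>
        mt t x - ss * mxx t x - deriv (\<lambda>y. Gf t y * m t y) x = 0"
    and ic: "\<forall>x\<in>{0..L}. m 0 x = m0 x \<and> u T x = uT x"
    and neu: "\<forall>t\<in>{0..T}. ux t 0 = 0 \<and> ux t L = 0"
    and flux: "\<forall>t\<in>{0..T}. \<forall>x\<in>{0, L}. ss * mx t x + Gf t x * m t x = 0"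
  using cs unfolding classical_solution_def Let_def Gf_def[symmetric] by auto

lemma d_ut: "t\<in>{0..T} \<Longrightarrow> x\<in>{0..L} \<Longrightarrow> ((\<lambda>s. u s x) has_real_derivative ut t x) (at t within {0..T})"
  using der by auto
lemma d_ux: "t\<in>{0..T} \<Longrightarrow> x\<in>{0..L} \<Longrightarrow> ((\<lambda>y. u t y) has_real_derivative ux t x) (at x within {0..L})"
  using der by auto
lemma d_uxx: "t\<in>{0..T} \<Longrightarrow> x\<in>{0..L} \<Longrightarrow> ((\<lambda>y. ux t y) has_real_derivative uxx t x) (at x within {0..L})"
  using der by auto
lemma d_mt: "t\<in>{0..T} \<Longrightarrow> x\<in>{0..L} \<Longrightarrow> ((\<lambda>s. m s x) has_real_derivative mt t x) (at t within {0..T})"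
  using der by auto
lemma d_mx: "t\<in>{0..T} \<Longrightarrow> x\<in>{0..L} \<Longrightarrow> ((\<lambda>y. m t y) has_real_derivative mx t x) (at x within {0..L})"
  using der by auto
lemma d_mxx: "t\<in>{0..T} \<Longrightarrow> x\<in>{0..L} \<Longrightarrow> ((\<lambda>y. mx t y) has_real_derivative mxx t x) (at x within {0..L})"
  using der by auto

lemma cont_slice:
  assumes "continuous_on RR (\<lambda>(t,x). F t x)" "t \<in> {0..T}"
  shows "continuous_on {0..L} (F t)"
proof -
  have "continuous_on {0..L} (\<lambda>x. (\<lambda>(t,x). F t x) (t, x))"
    by (rule continuous_on_compose2[OF assms(1)]) (use assms(2) in \<open>auto intro!: continuous_intros\<close>)
  then show ?thesis by simp
qed

lemma cI: "continuous_on {0..T} I"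
proof -
  have "continuous_on RR (\<lambda>p. (\<lambda>(t,x). ux t x) p * (\<lambda>(t,x). m t x) p)"
    by (rule continuous_on_mult[OF cux cm])
  then have "continuous_on ({0..T} \<times> cbox 0 L) (\<lambda>(t,x). ux t x * m t x)"
    by (simp add: case_prod_beta)
  then have "continuous_on {0..T} (\<lambda>t. integral (cbox 0 L) (\<lambda>x. ux t x * m t x))"
    by (rule integral_continuous_on_param)
  then show ?thesis by (simp add: I_def)
qed

lemma cGf: "continuous_on RR (\<lambda>(t,x). Gf t x)"
proof -
  have c1: "continuous_on RR (\<lambda>p. I (fst p))"
    by (rule continuous_on_compose2[OF cI]) (auto intro!: continuous_intros)
  have "continuous_on RR (\<lambda>p. 1/2 * (bb + cc * I (fst p) - (\<lambda>(t,x). ux t x) p))"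
    by (intro continuous_intros c1 cux)
  then show ?thesis by (simp add: Gf_eq case_prod_beta)
qed

lemma d_Gf: "t\<in>{0..T} \<Longrightarrow> x\<in>{0..L} \<Longrightarrow> ((\<lambda>y. Gf t y) has_real_derivative - uxx t x / 2) (at x within {0..L})"
  unfolding Gf_eq by (auto intro!: derivative_eq_intros d_uxx)

lemma u_eq: "t\<in>{0..T} \<Longrightarrow> x\<in>{0..L} \<Longrightarrow> ut t x + ss * uxx t x - r * u t x + (Gf t x)\<^sup>2 = 0"
proof -
  assume tx: "t\<in>{0..T}" "x\<in>{0..L}"
  have "continuous_on RR (\<lambda>p. (\<lambda>(t,x). ut t x) p + ss * (\<lambda>(t,x). uxx t x) p - r * (\<lambda>(t,x). u t x) p
      + ((\<lambda>(t,x). Gf t x) p)\<^sup>2)"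
    by (intro continuous_intros cut cuxx cu cGf)
  then have c: "continuous_on RR (\<lambda>(t,x). ut t x + ss * uxx t x - r * u t x + (Gf t x)\<^sup>2)"
    by (simp add: case_prod_beta)
  show ?thesis by (rule ext_closure[OF T L c _ tx]) (use pde in auto)
qed

lemma m_eq: "t\<in>{0..T} \<Longrightarrow> x\<in>{0..L} \<Longrightarrow> mt t x = ss * mxx t x + (- uxx t x / 2) * m t x + Gf t x * mx t x"
proof -
  assume tx: "t\<in>{0..T}" "x\<in>{0..L}"
  have "continuous_on RR (\<lambda>p. (\<lambda>(t,x). mt t x) p - (ss * (\<lambda>(t,x). mxx t x) p + (- (\<lambda>(t,x). uxx t x) p / 2) * (\<lambda>(t,x). m t x) p
      + (\<lambda>(t,x). Gf t x) p * (\<lambda>(t,x). mx t x) p))"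
    by (intro continuous_intros cmt cmxx cuxx cm cGf cmx) auto
  then have c: "continuous_on RR (\<lambda>(t,x). mt t x - (ss * mxx t x + (- uxx t x / 2) * m t x + Gf t x * mx t x))"
    by (simp add: case_prod_beta)
  have "mt t x - (ss * mxx t x + (- uxx t x / 2) * m t x + Gf t x * mx t x) = 0"
  proof (rule ext_closure[OF T L c _ tx])
    fix t x :: real assume t: "t\<in>{0<..<T}" and x: "x\<in>{0<..<L}"
    have at: "at x within {0..L} = at x" using x by (intro at_within_Icc_at) auto
    have "((\<lambda>y. Gf t y * m t y) has_real_derivative (- uxx t x / 2) * m t x + Gf t x * mx t x) (at x)"
      using DERIV_mult[OF d_Gf d_mx, of t x] t x at by (simp add: algebra_simps)
    then have dd: "deriv (\<lambda>y. Gf t y * m t y) x = (- uxx t x / 2) * m t x + Gf t x * mx t x"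
      by (rule DERIV_imp_deriv)
    have p: "mt t x - ss * mxx t x - deriv (\<lambda>y. Gf t y * m t y) x = 0" using pde t x by blast
    show "mt t x - (ss * mxx t x + (- uxx t x / 2) * m t x + Gf t x * mx t x) = 0"
      using p unfolding dd by linarith
  qed
  then show ?thesis by simp
qed

end



context sol begin

lemma m_nonneg: "\<forall>t\<in>{0..T}. \<forall>x\<in>{0..L}. m t x \<ge> 0"
proof -
  have c1: "continuous_on RR (\<lambda>(t,x). - uxx t x / 2)"
  proof -
    have "continuous_on RR (\<lambda>p. - (\<lambda>(t,x). uxx t x) p / 2)" by (intro continuous_intros cuxx) auto
    then show ?thesis by (simp add: case_prod_beta)
  qed
  obtain Bb where Bb: "\<forall>t\<in>{0..T}. \<forall>x\<in>{0..L}. \<bar>- uxx t x / 2\<bar> \<le> Bb"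
    using cont_bounded[OF c1] by blast
  obtain Bg where Bg: "\<forall>t\<in>{0..T}. \<forall>x\<in>{0..L}. \<bar>Gf t x\<bar> \<le> Bg"
    using cont_bounded[OF cGf] by blast
  show ?thesis
  proof (rule minp[where w=m and wt=mt and wx=mx and wxx=mxx and \<beta>="\<lambda>t x. - uxx t x / 2"
        and g=Gf and s=ss and Bb=Bb and Bg=Bg])
    show "0 < ss" using sig by simp
    show "\<And>x. x \<in> {0..L} \<Longrightarrow> 0 \<le> m 0 x" using ic m0nn by auto
    show "\<And>t x. t \<in> {0<..T} \<Longrightarrow> x \<in> {0..L} \<Longrightarrow> mt t x = ss * mxx t x + - uxx t x / 2 * m t x + Gf t x * mx t x"
      using m_eq by auto
    show "\<And>t x. t \<in> {0..T} \<Longrightarrow> x \<in> {0, L} \<Longrightarrow> ss * mx t x + Gf t x * m t x = 0"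
      using flux by auto
  qed (use L T cm d_mt d_mx d_mxx Bb Bg in auto)
qed

lemma ftc_interior:
  fixes f f' :: "real \<Rightarrow> real"
  assumes "continuous_on {0..L} f"
    and "\<And>x. x \<in> {0..L} \<Longrightarrow> (f has_real_derivative f' x) (at x within {0..L})"
  shows "(f' has_integral (f L - f 0)) {0..L}"
proof (rule fundamental_theorem_of_calculus_interior)
  show "0 \<le> L" using L by simp
  fix x assume x: "x \<in> {0<..<L}"
  have "at x within {0..L} = at x" using x by (intro at_within_Icc_at) auto
  then show "(f has_vector_derivative f' x) (at x)"
    using assms(2)[of x] x by (simp add: has_real_derivative_iff_has_vector_derivative)
qed (use assms in auto)

lemma mt_int: "t\<in>{0..T} \<Longrightarrow> integral {0..L} (mt t) = 0"
proof -
  assume t: "t\<in>{0..T}"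
  have i1: "((\<lambda>x. mxx t x) has_integral (mx t L - mx t 0)) {0..L}"
    by (rule ftc_interior) (use cont_slice[OF cmx t] d_mxx t in auto)
  have cG: "continuous_on {0..L} (Gf t)" using cont_slice[OF cGf t] .
  have cmm: "continuous_on {0..L} (m t)" using cont_slice[OF cm t] .
  have i2: "((\<lambda>x. (- uxx t x / 2) * m t x + Gf t x * mx t x) has_integral
        (Gf t L * m t L - Gf t 0 * m t 0)) {0..L}"
  proof (rule ftc_interior[where f="\<lambda>y. Gf t y * m t y"])
    show "continuous_on {0..L} (\<lambda>y. Gf t y * m t y)" by (intro continuous_intros cG cmm)
    fix x assume x: "x \<in> {0..L}"
    show "((\<lambda>y. Gf t y * m t y) has_real_derivative (- uxx t x / 2) * m t x + Gf t x * mx t x) (at x within {0..L})"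
      using DERIV_mult[OF d_Gf d_mx, of t x] t x by (simp add: algebra_simps)
  qed
  have "((\<lambda>x. ss * mxx t x + ((- uxx t x / 2) * m t x + Gf t x * mx t x)) has_integral
        (ss * (mx t L - mx t 0) + (Gf t L * m t L - Gf t 0 * m t 0))) {0..L}"
    by (intro has_integral_add has_integral_mult_right i1 i2)
  moreover have "ss * (mx t L - mx t 0) + (Gf t L * m t L - Gf t 0 * m t 0) = 0"
  proof -
    have f0: "ss * mx t 0 + Gf t 0 * m t 0 = 0" and fL: "ss * mx t L + Gf t L * m t L = 0"
      using flux t by auto
    show ?thesis unfolding right_diff_distrib using f0 fL by linarith
  qed
  ultimately have "((\<lambda>x. ss * mxx t x + ((- uxx t x / 2) * m t x + Gf t x * mx t x)) has_integral 0) {0..L}"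
    by simp
  then have "(mt t has_integral 0) {0..L}"
    by (rule has_integral_eq[rotated]) (use m_eq t in auto)
  then show ?thesis by (rule integral_unique)
qed

lemma mass: "t\<in>{0..T} \<Longrightarrow> integral {0..L} (m t) = 1"
proof -
  assume t: "t\<in>{0..T}"
  have d: "((\<lambda>t. integral (cbox 0 L) (m t)) has_real_derivative integral (cbox 0 L) (mt t')) (at t' within {0..T})"
    if "t' \<in> {0..T}" for t'
  proof (rule leibniz_rule_field_derivative[where fx=mt])
    show "\<And>x s. x \<in> {0..T} \<Longrightarrow> s \<in> cbox 0 L \<Longrightarrow> ((\<lambda>x. m x s) has_field_derivative mt x s) (at x within {0..T})"
      using d_mt by auto
    show "\<And>x. x \<in> {0..T} \<Longrightarrow> m x integrable_on cbox 0 L"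
      using cont_slice[OF cm] by (auto intro: integrable_continuous_interval)
    show "continuous_on ({0..T} \<times> cbox 0 L) (\<lambda>(x, t). mt x t)" using cmt by simp
  qed (use that in auto)
  have "((\<lambda>t. integral {0..L} (m t)) has_real_derivative 0) (at t' within {0..T})"
    if "t' \<in> {0..T}" for t'
    using d[OF that] mt_int[OF that] by simp
  then obtain k where k: "\<forall>x\<in>{0..T}. integral {0..L} (m x) = k"
    using has_field_derivative_zero_constant[of "{0..T}" "\<lambda>t. integral {0..L} (m t)"] by auto
  have "integral {0..L} (m 0) = integral {0..L} m0"
    by (rule integral_cong) (use ic in auto)
  also have "\<dots> = 1" using m0int by (rule integral_unique)
  finally show ?thesis using k t T by auto
qed

lemma I_bound:
  assumes M: "\<forall>t\<in>{0..T}. \<forall>x\<in>{0..L}. \<bar>ux t x\<bar> \<le> M" and t: "t\<in>{0..T}"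
  shows "\<bar>I t\<bar> \<le> M"
proof -
  have cm': "continuous_on {0..L} (m t)" using cont_slice[OF cm t] .
  have cux': "continuous_on {0..L} (ux t)" using cont_slice[OF cux t] .
  have "norm (integral {0..L} (\<lambda>y. ux t y * m t y)) \<le> integral {0..L} (\<lambda>y. M * m t y)"
  proof (rule integral_norm_bound_integral)
    show "(\<lambda>y. ux t y * m t y) integrable_on {0..L}"
      by (intro integrable_continuous_interval continuous_intros cm' cux')
    show "(\<lambda>y. M * m t y) integrable_on {0..L}"
      by (intro integrable_continuous_interval continuous_intros cm')
    fix y assume y: "y \<in> {0..L}"
    have "m t y \<ge> 0" using m_nonneg t y by auto
    then show "norm (ux t y * m t y) \<le> M * m t y"
      using M t y by (simp add: abs_mult mult_right_mono)
  qed
  also have "\<dots> = M" using mass[OF t] by simp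
  finally show ?thesis by (simp add: I_def)
qed

lemma Gf_bound:
  assumes M: "\<forall>t\<in>{0..T}. \<forall>x\<in>{0..L}. \<bar>ux t x\<bar> \<le> M" and t: "t\<in>{0..T}" and x: "x\<in>{0..L}"
  shows "\<bar>Gf t x\<bar> \<le> 1/2 * (bb + cc * M + M)"
proof -
  have cc: "cc > 0" "bb > 0" using eps by auto
  have "\<bar>cc * I t\<bar> = cc * \<bar>I t\<bar>" by (simp only: abs_mult abs_of_pos[OF cc(1)])
  also have "\<dots> \<le> cc * M" by (intro mult_left_mono I_bound[OF M t]) (use cc in auto)
  finally have "\<bar>cc * I t\<bar> \<le> cc * M" .
  moreover have "\<bar>ux t x\<bar> \<le> M" using M t x by auto
  ultimately have "\<bar>bb + cc * I t - ux t x\<bar> \<le> bb + cc * M + M" using cc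
    unfolding abs_le_iff by linarith
  then show ?thesis unfolding Gf_eq by (simp add: abs_mult)
qed

lemma u_upper:
  assumes Kg: "\<forall>t\<in>{0..T}. \<forall>x\<in>{0..L}. \<bar>Gf t x\<bar> \<le> Kg"
    and Bu: "\<forall>x\<in>{0..L}. uT x \<le> Bu" "Kg^2 \<le> r * Bu"
  shows "\<forall>t\<in>{0..T}. \<forall>x\<in>{0..L}. u t x \<le> Bu"
proof (rule maxp[where w=u and wt=ut and wx=ux and wxx=uxx and s=ss and r=r])
  fix t x assume t: "t \<in> {0..<T}" and x: "x \<in> {0..L}"
  have "(Gf t x)^2 = \<bar>Gf t x\<bar>^2" by simp
  also have "\<dots> \<le> Kg^2" using Kg t x by (intro power_mono) auto
  finally have "(Gf t x)^2 \<le> r * Bu" using Bu by linarith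
  then show "r * u t x \<le> ut t x + ss * uxx t x + r * Bu" using u_eq[of t x] t x by auto
qed (use L T r cu d_ut d_ux d_uxx ic Bu neu in auto)

lemma u_lower:
  assumes uT: "\<forall>x\<in>{0..L}. uT x \<ge> 0"
  shows "\<forall>t\<in>{0..T}. \<forall>x\<in>{0..L}. - u t x \<le> 0"
proof (rule maxp[where w="\<lambda>t x. - u t x" and wt="\<lambda>t x. - ut t x" and wx="\<lambda>t x. - ux t x"
      and wxx="\<lambda>t x. - uxx t x" and s=ss and r=r])
  show "continuous_on RR (\<lambda>(t, x). - u t x)"
  proof -
    have "continuous_on RR (\<lambda>p. - (\<lambda>(t,x). u t x) p)" by (intro continuous_intros cu)
    then show ?thesis by (simp add: case_prod_beta)
  qed
  fix t x assume t: "t \<in> {0..<T}" and x: "x \<in> {0..L}"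
  have e: "ut t x + ss * uxx t x - r * u t x + (Gf t x)\<^sup>2 = 0" using u_eq[of t x] t x by auto
  have "r * - u t x = - (r * u t x)" "ss * - uxx t x = - (ss * uxx t x)" by simp_all
  then show "r * - u t x \<le> - ut t x + ss * - uxx t x + r * 0"
    using e zero_le_power2[of "Gf t x"] by linarith
qed (use L T r d_ut d_ux d_uxx ic uT neu in \<open>auto intro!: DERIV_minus\<close>)

end



context sol begin

lemma ux_bound:
  assumes duT: "\<And>x. x\<in>{0..L} \<Longrightarrow> (uT has_real_derivative uT' x) (at x within {0..L})"
    and M: "\<And>x. x\<in>{0..L} \<Longrightarrow> \<bar>uT' x\<bar> \<le> M"
  shows "\<forall>t\<in>{0..T}. \<forall>x\<in>{0..L}. \<bar>ux t x\<bar> \<le> M"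
proof (intro ballI)
  fix t x assume t: "t\<in>{0..T}" and x: "x\<in>{0..L}"
  have M0: "M \<ge> 0" using M[of 0] L by force
  show "\<bar>ux t x\<bar> \<le> M"
  proof (cases "x = L")
    case True then show ?thesis using neu t M0 by auto
  next
    case False
    then have xL: "x < L" using x by auto
    show ?thesis
    proof (rule field_le_epsilon)
      fix e :: real assume e: "0 < e"
      have "uniformly_continuous_on RR (\<lambda>(t,x). ux t x)"
        by (rule compact_uniformly_continuous[OF cux]) (auto intro: compact_Times)
      then obtain \<delta> where \<delta>: "\<delta> > 0" and uc: "\<forall>p\<in>RR. \<forall>q\<in>RR. dist q p < \<delta> \<longrightarrow>
          dist ((\<lambda>(t,x). ux t x) q) ((\<lambda>(t,x). ux t x) p) < e/2"
        unfolding uniformly_continuous_on_def using e half_gt_zero by blast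
      have uc2: "\<bar>ux t' z - ux t' y\<bar> < e/2"
        if "t'\<in>{0..T}" "y\<in>{0..L}" "z\<in>{0..L}" "\<bar>z - y\<bar> < \<delta>" for t' y z
      proof -
        have "dist (t',z) (t',y) < \<delta>" using that by (simp add: dist_Pair_Pair dist_real_def)
        then show ?thesis using uc that by (fastforce simp: dist_real_def)
      qed
      define h where "h = min \<delta> (L - x) / 2"
      have h: "0 < h" "h < \<delta>" "x + h \<le> L" "h < L"
        using \<delta> xL x L by (auto simp: h_def min_def field_simps)
      have Lh: "0 < L - h" using h by simp
      define B where "B = M + e/2"
      have B0: "B \<ge> 0" using M0 e by (simp add: B_def)
      define w where "w t y = (u t (y+h) - u t y)/h" for t y
      have mvt_w: "\<exists>\<xi>\<in>{y<..<y+h}. w t' y = ux t' \<xi>" if t': "t'\<in>{0..T}" and y: "y\<in>{0..L-h}" for t' y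
      proof -
        have "\<exists>\<xi>\<in>{y<..<y+h}. u t' (y+h) - u t' y = (*) (ux t' \<xi>) (y + h - y)"
        proof (rule mvt_simple)
          fix z assume "y \<le> z" "z \<le> y + h"
          then have "((\<lambda>y. u t' y) has_real_derivative ux t' z) (at z within {0..L})"
            using d_ux[OF t'] y h by auto
          then show "((\<lambda>y. u t' y) has_derivative (*) (ux t' z)) (at z within {y..y+h})"
            unfolding has_field_derivative_def[symmetric]
            by (rule DERIV_subset) (use y h in auto)
        qed (use h in auto)
        then obtain \<xi> where "\<xi>\<in>{y<..<y+h}" "u t' (y+h) - u t' y = ux t' \<xi> * h" by auto
        then show ?thesis using h by (auto simp: w_def)
      qed
      have wclose: "\<bar>w t' y - ux t' y\<bar> < e/2" if t': "t'\<in>{0..T}" and y: "y\<in>{0..L-h}" for t' y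
      proof -
        obtain \<xi> where \<xi>: "\<xi>\<in>{y<..<y+h}" "w t' y = ux t' \<xi>" using mvt_w[OF t' y] by blast
        show ?thesis unfolding \<xi>(2) by (rule uc2) (use t' y \<xi> h in auto)
      qed
      have wb0: "\<bar>w t' 0\<bar> < e/2" if t': "t'\<in>{0..T}" for t'
        using wclose[OF t', of 0] neu t' Lh by auto
      have wbL: "\<bar>w t' (L-h)\<bar> < e/2" if t': "t'\<in>{0..T}" for t'
      proof -
        obtain \<xi> where \<xi>: "\<xi>\<in>{L-h<..<L}" "w t' (L-h) = ux t' \<xi>" using mvt_w[OF t', of "L-h"] Lh by auto
        have "\<bar>ux t' \<xi> - ux t' L\<bar> < e/2" by (rule uc2) (use t' \<xi> h L in auto)
        then show ?thesis using \<xi> neu t' by auto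
      qed
      have wT: "\<bar>w T y\<bar> \<le> M" if y: "y\<in>{0..L-h}" for y
      proof -
        have "\<exists>\<xi>\<in>{y<..<y+h}. uT (y+h) - uT y = (*) (uT' \<xi>) (y + h - y)"
        proof (rule mvt_simple)
          fix z assume "y \<le> z" "z \<le> y + h"
          then have "(uT has_real_derivative uT' z) (at z within {0..L})"
            using duT y h by auto
          then show "(uT has_derivative (*) (uT' z)) (at z within {y..y+h})"
            unfolding has_field_derivative_def[symmetric]
            by (rule DERIV_subset) (use y h in auto)
        qed (use h in auto)
        then obtain \<xi> where \<xi>: "\<xi>\<in>{y<..<y+h}" "uT (y+h) - uT y = uT' \<xi> * h" by auto
        have "w T y = uT' \<xi>" using \<xi> h y ic by (auto simp: w_def)
        then show ?thesis using M[of \<xi>] \<xi> y h by auto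
      qed
      have dwt: "((\<lambda>s. w s y) has_real_derivative (ut t' (y+h) - ut t' y)/h) (at t' within {0..T})"
        if "t'\<in>{0..T}" "y\<in>{0..L-h}" for t' y
        unfolding w_def by (intro DERIV_cdivide DERIV_diff d_ut) (use that h in auto)
      have dwx: "((\<lambda>z. w t' z) has_real_derivative (ux t' (y+h) - ux t' y)/h) (at y within {0..L-h})"
        if "t'\<in>{0..T}" "y\<in>{0..L-h}" for t' y
        unfolding w_def
      proof (intro DERIV_cdivide DERIV_diff)
        show "((\<lambda>z. u t' (z + h)) has_real_derivative ux t' (y + h)) (at y within {0..L - h})"
          by (rule shift_deriv[OF d_ux]) (use that h in auto)
        show "((\<lambda>z. u t' z) has_real_derivative ux t' y) (at y within {0..L - h})"
          by (rule DERIV_subset[OF d_ux]) (use that h in auto)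
      qed
      define wx where "wx t' y = (ux t' (y+h) - ux t' y)/h" for t' y
      have dwxx: "((\<lambda>z. wx t' z) has_real_derivative (uxx t' (y+h) - uxx t' y)/h) (at y within {0..L-h})"
        if "t'\<in>{0..T}" "y\<in>{0..L-h}" for t' y
        unfolding wx_def
      proof (intro DERIV_cdivide DERIV_diff)
        show "((\<lambda>z. ux t' (z + h)) has_real_derivative uxx t' (y + h)) (at y within {0..L - h})"
          by (rule shift_deriv[OF d_uxx]) (use that h in auto)
        show "((\<lambda>z. ux t' z) has_real_derivative uxx t' y) (at y within {0..L - h})"
          by (rule DERIV_subset[OF d_uxx]) (use that h in auto)
      qed
      have cw: "continuous_on ({0..T}\<times>{0..L-h}) (\<lambda>(t,y). w t y)"
      proof -
        have c1: "continuous_on ({0..T}\<times>{0..L-h}) (\<lambda>p. (\<lambda>(t,x). u t x) (fst p, snd p + h))"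
          by (rule continuous_on_compose2[OF cu]) (use h in \<open>auto intro!: continuous_intros\<close>)
        have c2: "continuous_on ({0..T}\<times>{0..L-h}) (\<lambda>p. (\<lambda>(t,x). u t x) (fst p, snd p))"
          by (rule continuous_on_compose2[OF cu]) (use h in \<open>auto intro!: continuous_intros\<close>)
        have "continuous_on ({0..T}\<times>{0..L-h}) (\<lambda>p. ((\<lambda>(t,x). u t x) (fst p, snd p + h) - (\<lambda>(t,x). u t x) (fst p, snd p)) / h)"
          by (intro continuous_intros c1 c2) (use h in auto)
        then show ?thesis by (simp add: w_def case_prod_beta)
      qed
      have weq: "r * w t' y = (ut t' (y+h) - ut t' y)/h + ss * ((uxx t' (y+h) - uxx t' y)/h)"
        if t': "t'\<in>{0..T}" and y: "y\<in>{0..L-h}" and wx0: "wx t' y = 0" for t' y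
      proof -
        have e1: "ut t' (y+h) + ss * uxx t' (y+h) - r * u t' (y+h) + (Gf t' (y+h))\<^sup>2 = 0"
          using u_eq[of t' "y+h"] t' y h by auto
        have e2: "ut t' y + ss * uxx t' y - r * u t' y + (Gf t' y)\<^sup>2 = 0"
          using u_eq[of t' y] t' y h by auto
        have "ux t' (y+h) = ux t' y" using wx0 h by (simp add: wx_def)
        then have GG: "Gf t' (y+h) = Gf t' y" by (simp add: Gf_eq)
        have "r * (u t' (y+h) - u t' y) = (ut t' (y+h) - ut t' y) + ss * (uxx t' (y+h) - uxx t' y)"
          using e1 e2 unfolding GG right_diff_distrib by linarith
        then have "r * w t' y = ((ut t' (y+h) - ut t' y) + ss * (uxx t' (y+h) - uxx t' y)) / h"
          by (simp add: w_def)
        then show ?thesis by (simp add: add_divide_distrib)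
      qed
      have up: "\<forall>t\<in>{0..T}. \<forall>y\<in>{0..L-h}. w t y \<le> B"
      proof (rule maxp[where w=w and wt="\<lambda>t y. (ut t (y+h) - ut t y)/h" and wx=wx
            and wxx="\<lambda>t y. (uxx t (y+h) - uxx t y)/h" and s=ss and r=r])
        fix t' y assume "t' \<in> {0..<T}" "y \<in> {0..L-h}" "wx t' y = 0"
        then show "r * w t' y \<le> (ut t' (y+h) - ut t' y)/h + ss * ((uxx t' (y+h) - uxx t' y)/h) + r * B"
          using weq[of t' y] B0 r by (simp add: mult_nonneg_nonneg)
      next
        fix t' y assume "t' \<in> {0..<T}" "y \<in> {0, L-h}"
        then show "wx t' y = 0 \<or> w t' y \<le> B" using wb0[of t'] wbL[of t'] M0 by (auto simp: B_def abs_less_iff)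
      next
        fix y assume "y \<in> {0..L-h}"
        then show "w T y \<le> B" using wT[of y] e by (auto simp: B_def)
      qed (use Lh T r cw dwt dwx[unfolded wx_def[symmetric]] dwxx in auto)
      have lo: "\<forall>t\<in>{0..T}. \<forall>y\<in>{0..L-h}. - w t y \<le> B"
      proof (rule maxp[where w="\<lambda>t y. - w t y" and wt="\<lambda>t y. - ((ut t (y+h) - ut t y)/h)" and wx="\<lambda>t y. - wx t y"
            and wxx="\<lambda>t y. - ((uxx t (y+h) - uxx t y)/h)" and s=ss and r=r])
        fix t' y assume "t' \<in> {0..<T}" "y \<in> {0..L-h}" "- wx t' y = 0"
        then show "r * - w t' y \<le> - ((ut t' (y+h) - ut t' y)/h) + ss * - ((uxx t' (y+h) - uxx t' y)/h) + r * B"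
          using weq[of t' y] B0 r by (simp add: mult_nonneg_nonneg)
      next
        fix t' y assume "t' \<in> {0..<T}" "y \<in> {0, L-h}"
        then show "- wx t' y = 0 \<or> - w t' y \<le> B" using wb0[of t'] wbL[of t'] M0 by (auto simp: B_def abs_less_iff)
      next
        fix y assume "y \<in> {0..L-h}"
        then show "- w T y \<le> B" using wT[of y] e by (auto simp: B_def)
      next
        show "continuous_on ({0..T}\<times>{0..L-h}) (\<lambda>(t,y). - w t y)"
        proof -
          have "continuous_on ({0..T}\<times>{0..L-h}) (\<lambda>p. - (\<lambda>(t,y). w t y) p)" by (intro continuous_intros cw)
          then show ?thesis by (simp add: case_prod_beta)
        qed
      qed (use Lh T r dwt dwx[unfolded wx_def[symmetric]] dwxx in \<open>auto intro!: DERIV_minus\<close>)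
      have xr: "x \<in> {0..L-h}" using x h by auto
      have "\<bar>w t x\<bar> \<le> B" using up lo t xr by (auto simp: abs_le_iff)
      moreover have "\<bar>w t x - ux t x\<bar> < e/2" using wclose[OF t xr] .
      ultimately show "\<bar>ux t x\<bar> \<le> M + e" unfolding B_def by linarith
    qed
  qed
qed

end



lemma cont_bounded1:
  fixes f :: "real \<Rightarrow> real"
  assumes "continuous_on {0..L} f"
  shows "\<exists>B. \<forall>x\<in>{0..L}. \<bar>f x\<bar> \<le> B"
proof -
  have "compact (f ` {0..L})" by (rule compact_continuous_image[OF assms]) auto
  then have "bounded (f ` {0..L})" by (rule compact_imp_bounded)
  then show ?thesis unfolding bounded_iff by auto
qed

theorem lemma2p2:
  fixes L T r \<epsilon> :: real and uT m0 :: "real \<Rightarrow> real"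
  assumes "L > 0" and "T > 0" and "r > 0" and "\<epsilon> > 0"
    and "\<exists>\<gamma>>0. \<exists>uT' uT''. C2_holder \<gamma> L uT uT' uT'' \<and> uT' 0 = 0 \<and> uT' L = 0"
    and "\<exists>\<gamma>>0. \<exists>m0' m0''. C2_holder \<gamma> L m0 m0' m0'' \<and>
           m0 0 = 0 \<and> m0' 0 = 0 \<and> m0 L = 0 \<and> m0' L = 0"
    and "\<forall>x\<in>{0..L}. m0 x \<ge> 0" and "(m0 has_integral 1) {0..L}"
    and "\<forall>x\<in>{0..L}. uT x \<ge> 0"
  shows "\<exists>C>0. \<forall>\<sigma>>0. \<forall>u ut ux uxx m mt mx mxx.
           classical_solution \<sigma> r \<epsilon> L T uT m0 u ut ux uxx m mt mx mxx \<longrightarrow>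
             (SUP p\<in>{0..T}\<times>{0..L}. \<bar>u (fst p) (snd p)\<bar>)
               + (SUP p\<in>{0..T}\<times>{0..L}. \<bar>ux (fst p) (snd p)\<bar>) \<le> C \<and>
             (\<forall>t\<in>{0..T}. \<bar>integral {0..L} (\<lambda>x. ux t x * m t x)\<bar> \<le> C)"
proof -
  obtain \<gamma> uT' uT'' where "C2_holder \<gamma> L uT uT' uT''" using assms(5) by blast
  then have duT: "\<And>x. x\<in>{0..L} \<Longrightarrow> (uT has_real_derivative uT' x) (at x within {0..L})"
    and duT': "\<And>x. x\<in>{0..L} \<Longrightarrow> (uT' has_real_derivative uT'' x) (at x within {0..L})"
    unfolding C2_holder_def by auto
  have cuT': "continuous_on {0..L} uT'"
    unfolding continuous_on_eq_continuous_within using duT' DERIV_continuous by blast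
  have cuT: "continuous_on {0..L} uT"
    unfolding continuous_on_eq_continuous_within using duT DERIV_continuous by blast
  obtain M where M: "\<forall>x\<in>{0..L}. \<bar>uT' x\<bar> \<le> M" using cont_bounded1[OF cuT'] by blast
  obtain Mt where Mt: "\<forall>x\<in>{0..L}. \<bar>uT x\<bar> \<le> Mt" using cont_bounded1[OF cuT] by blast
  have M0: "M \<ge> 0" using M assms(1) by (metis abs_ge_zero atLeastAtMost_iff less_imp_le order.refl order_trans)
  have Mt0: "Mt \<ge> 0" using Mt assms(1) by (metis abs_ge_zero atLeastAtMost_iff less_imp_le order.refl order_trans)
  define Kg where "Kg = 1/2 * (2/(2+\<epsilon>) + \<epsilon>/(2+\<epsilon>) * M + M)"
  define Bu where "Bu = max Mt (Kg^2 / r)"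
  have Bu0: "Bu \<ge> 0" using Mt0 by (simp add: Bu_def)
  have rBu: "Kg^2 \<le> r * Bu"
  proof -
    have "Kg^2 = r * (Kg^2 / r)" using assms(3) by simp
    also have "\<dots> \<le> r * Bu" using assms(3) by (intro mult_left_mono) (auto simp: Bu_def)
    finally show ?thesis .
  qed
  show ?thesis
  proof (intro exI[of _ "Bu + M + 1"] conjI allI impI)
    show "0 < Bu + M + 1" using Bu0 M0 by simp
    fix \<sigma> :: real and u ut ux uxx m mt mx mxx :: "real \<Rightarrow> real \<Rightarrow> real"
    assume sig: "0 < \<sigma>" and cs: "classical_solution \<sigma> r \<epsilon> L T uT m0 u ut ux uxx m mt mx mxx"
    interpret S: sol \<sigma> r \<epsilon> L T uT m0 u ut ux uxx m mt mx mxx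
      by unfold_locales (use assms cs sig in auto)
    have uxb: "\<forall>t\<in>{0..T}. \<forall>x\<in>{0..L}. \<bar>ux t x\<bar> \<le> M"
      by (rule S.ux_bound[OF duT]) (use M in auto)
    have Gb: "\<forall>t\<in>{0..T}. \<forall>x\<in>{0..L}. \<bar>S.Gf t x\<bar> \<le> Kg"
      using S.Gf_bound[OF uxb] by (auto simp: Kg_def)
    have up: "\<forall>t\<in>{0..T}. \<forall>x\<in>{0..L}. u t x \<le> Bu"
      by (rule S.u_upper[OF Gb]) (use Mt rBu in \<open>auto simp: Bu_def abs_le_iff\<close>)
    have lo: "\<forall>t\<in>{0..T}. \<forall>x\<in>{0..L}. - u t x \<le> 0"
      by (rule S.u_lower) (use assms(9) in auto)
    have ub: "\<bar>u t x\<bar> \<le> Bu" if "t\<in>{0..T}" "x\<in>{0..L}" for t x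
    proof -
      have "u t x \<le> Bu" "- u t x \<le> 0" using up lo that by auto
      then show ?thesis using Bu0 by linarith
    qed
    have s1: "(SUP p\<in>{0..T}\<times>{0..L}. \<bar>u (fst p) (snd p)\<bar>) \<le> Bu"
      by (rule cSUP_least) (use assms(1,2) ub in auto)
    have s2: "(SUP p\<in>{0..T}\<times>{0..L}. \<bar>ux (fst p) (snd p)\<bar>) \<le> M"
      by (rule cSUP_least) (use assms(1,2) uxb in auto)
    show "(SUP p\<in>{0..T}\<times>{0..L}. \<bar>u (fst p) (snd p)\<bar>)
               + (SUP p\<in>{0..T}\<times>{0..L}. \<bar>ux (fst p) (snd p)\<bar>) \<le> Bu + M + 1"
      using s1 s2 by linarith
    show "\<forall>t\<in>{0..T}. \<bar>integral {0..L} (\<lambda>x. ux t x * m t x)\<bar> \<le> Bu + M + 1"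
      using S.I_bound[OF uxb] Bu0 by (auto simp: S.I_def) (smt (verit))
  qed
qed


end
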